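(* Let $(x_0,y_0)$ be a pair of integers satisfying $S_{2,1}$. Let $y_{-1}$ and $x_1$ be the real numbers defined by $y_{-1}y_0=x_0^3+x_0+1$ and $x_0x_1=y_0^3+y_0^2+1$. Then $y_{-1},x_1$ are integers, $(y_{-1},x_0)$ satisfies $S_{1,1}$, and $(y_0,x_1)$ satisfies $S_{2,2}$.
   Context: For $\lambda_a,\lambda_b\in\{1,2\}$, a pair of integers $(x,y)$ satisfies the system $S_{\lambda_a,\lambda_b}$ if $x\mid y^3+y^{\lambda_a}+1$ and $y\mid x^3+x^{\lambda_b}+1$. So $S_{1,1}$: $x\mid y^3+y+1,\ y\mid x^3+x+1$; $S_{2,1}$: $x\mid y^3+y^2+1,\ y\mid x^3+x+1$; $S_{2,2}$: $x\mid y^3+y^2+1,\ y\mid x^3+x^2+1$. *)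

theory Defs
  imports Complex_Main
begin

definition satisfies_S :: "nat \<Rightarrow> nat \<Rightarrow> int \<Rightarrow> int \<Rightarrow> bool" where
  "satisfies_S la lb x y \<longleftrightarrow> x dvd (y^3 + y^la + 1) \<and> y dvd (x^3 + x^lb + 1)"

end

theory Submission
  imports Defs
begin

lemma key:
  fixes x y a :: int
  assumes ay: "a * y = x^3 + x + 1" and xd: "x dvd y^3 + y^2 + 1"
  shows "x dvd a^3 + a + 1"
proof -
  define N where "N = x^3 + x + 1"
  have n1: "x dvd N - 1" unfolding N_def by (simp add: power3_eq_cube)
  have n3: "N - 1 dvd N^3 - 1"
    by (rule dvdI[of _ _ "N^2+N+1"]) (simp add: algebra_simps power2_eq_square power3_eq_cube)
  have e: "y^3 * (a^3 + a + 1) = (N^3 - 1) + (N - 1) * y^2 + (y^3 + y^2 + 1)"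
    using ay unfolding N_def[symmetric]
    by (simp add: algebra_simps power2_eq_square power3_eq_cube)
  have "x dvd y^3 * (a^3 + a + 1)"
    unfolding e using n1 n3 xd by (meson dvd_add dvd_mult2 dvd_trans)
  moreover have "coprime x (y^3)"
  proof -
    have "coprime x y"
    proof (rule coprimeI)
      fix d assume "d dvd x" "d dvd y"
      then have "d dvd a*y - x*(x^2+1)" by simp
      moreover have "a*y - x*(x^2+1) = 1" using ay by (simp add: algebra_simps power2_eq_square power3_eq_cube)
      ultimately show "d dvd 1" by simp
    qed
    then show ?thesis by simp
  qed
  ultimately show ?thesis using coprime_dvd_mult_right_iff by blast
qed

lemma key2:
  fixes x y a :: int
  assumes ay: "a * y = x^3 + x^2 + 1" and xd: "x dvd y^3 + y + 1"
  shows "x dvd a^3 + a^2 + 1"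
proof -
  define N where "N = x^3 + x^2 + 1"
  have n1: "x dvd N - 1" unfolding N_def by (simp add: power3_eq_cube)
  have n3: "N - 1 dvd N^3 - 1"
    by (rule dvdI[of _ _ "N^2+N+1"]) (simp add: algebra_simps power2_eq_square power3_eq_cube)
  have n2: "N - 1 dvd N^2 - 1"
    by (rule dvdI[of _ _ "N+1"]) (simp add: algebra_simps power2_eq_square)
  have e: "y^3 * (a^3 + a^2 + 1) = (N^3 - 1) + (N^2 - 1) * y + (y^3 + y + 1)"
    using ay unfolding N_def[symmetric]
    by (simp add: algebra_simps power2_eq_square power3_eq_cube)
  have "x dvd y^3 * (a^3 + a^2 + 1)"
    unfolding e using n1 n2 n3 xd by (meson dvd_add dvd_mult2 dvd_trans)
  moreover have "coprime x (y^3)"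
  proof -
    have "coprime x y"
    proof (rule coprimeI)
      fix d assume "d dvd x" "d dvd y"
      then have "d dvd a*y - x*(x^2+x)" by simp
      moreover have "a*y - x*(x^2+x) = 1" using ay by (simp add: algebra_simps power2_eq_square power3_eq_cube)
      ultimately show "d dvd 1" by simp
    qed
    then show ?thesis by simp
  qed
  ultimately show ?thesis using coprime_dvd_mult_right_iff by blast
qed

theorem corollary3:
  fixes x0 y0 :: int and ym1 x1 :: real
  assumes "satisfies_S 2 1 x0 y0"
    and "ym1 * of_int y0 = of_int (x0^3 + x0 + 1)"
    and "of_int x0 * x1 = of_int (y0^3 + y0^2 + 1)"
  shows "\<exists>a b :: int. ym1 = of_int a \<and> x1 = of_int b \<and>
           satisfies_S 1 1 a x0 \<and> satisfies_S 2 2 y0 b"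
proof -
  have d1: "x0 dvd y0^3 + y0^2 + 1" and d2: "y0 dvd x0^3 + x0^1 + 1"
    using assms(1) unfolding satisfies_S_def by auto
  have y0: "y0 \<noteq> 0"
  proof
    assume "y0 = 0"
    then have "x0 * (x0^2+1) = -1" using d2 by (simp add: algebra_simps power2_eq_square power3_eq_cube)
    then have "x0 dvd 1" by (metis dvd_minus_iff dvd_triv_left)
    then have "x0 = 1 \<or> x0 = -1" using zdvd1_eq by auto
    then show False using \<open>x0 * (x0^2+1) = -1\<close> by auto
  qed
  have x0: "x0 \<noteq> 0"
  proof
    assume "x0 = 0"
    then have "y0^2 * (y0+1) = -1" using d1 by (simp add: algebra_simps power2_eq_square power3_eq_cube)
    then have "y0^2 dvd 1" by (metis dvd_minus_iff dvd_triv_left)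
    then have "y0^2 = 1" by (simp add: zdvd1_eq)
    then have "y0 + 1 = -1" using \<open>y0^2 * (y0+1) = -1\<close> by simp
    then have "y0 = -2" by simp
    then show False using \<open>y0^2 = 1\<close> by simp
  qed
  obtain a where a: "x0^3 + x0 + 1 = y0 * a" using d2 by auto
  obtain b where b: "y0^3 + y0^2 + 1 = x0 * b" using d1 by auto
  have "ym1 * of_int y0 = of_int a * of_int y0" using assms(2) a by simp
  hence ya: "ym1 = of_int a" using y0 by simp
  have "of_int x0 * x1 = of_int x0 * (of_int b :: real)" using assms(3) b by simp
  hence xb: "x1 = of_int b" using x0 by simp
  have s1: "satisfies_S 1 1 a x0"
    unfolding satisfies_S_def
    using key[of a y0 x0] a d1 by (simp add: mult.commute)
  have s2: "satisfies_S 2 2 y0 b"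
    unfolding satisfies_S_def
    using key2[of b x0 y0] b d2 by (simp add: mult.commute)
  show ?thesis using ya xb s1 s2 by blast
qed

end
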